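(* Let $M_0<M$ be finite numbers, let $Q^0\subseteq\mathbb{R}^{m+1}$ be a rational polyhedron of height $M$ in the $(x,z)$-space ($x\in\mathbb{R}^m$, $z\in\mathbb{R}$), and let $Q_x\subseteq\mathbb{R}^m$ be a rational polytope of dimension at least one whose relative interior contains $\{x : \exists z>M_0 \text{ with } (x,z)\in Q^0\}$. Then $Q^0\subseteq R(Q_x,M,M_0)$.
   Context: For a polyhedron $H\subseteq\mathbb{R}^m\times\mathbb{R}$ and $\bar x\in\mathbb{R}^m$, the height of $\bar x$ with respect to $H$ is $\max\{\bar z:(\bar x,\bar z)\in H\}$ (it is $+\infty$ if unbounded and $-\infty$ if the set is empty); the height of $H$ is the supremum of the heights of all $\bar x\in\mathbb{R}^m$. For a rational polytope $Q_x\subseteq\mathbb{R}^m$ of dimension at least 1 and finite $M_0<M$, $R(Q_x,M,M_0)$ is the set of all $(\bar x,\bar z)\in\mathbb{R}^m\times\mathbb{R}$ with $\bar x$ in the affine hull of $Q_x$ and $\bar z\le M$ if $\bar x\in\mathrm{relint}(Q_x)$, and $\bar z\le M_0-\frac{d(\bar x,Q_x)}{\mathrm{diam}(Q_x)}(M-M_0)$ otherwise, where $d$ is Euclidean distance and $\mathrm{diam}$ the maximum distance between two points of $Q_x$. *)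

theory Defs
  imports "HOL-Analysis.Analysis"
begin

definition rational_polyhedron :: "'a::euclidean_space set \<Rightarrow> bool" where
  "rational_polyhedron S \<longleftrightarrow>
     (\<exists>F. finite F \<and> (\<forall>(a, b)\<in>F. (\<forall>i\<in>Basis. a \<bullet> i \<in> \<rat>) \<and> b \<in> \<rat>) \<and>
          S = (\<Inter>(a, b)\<in>F. {x. a \<bullet> x \<le> b}))"

definition rational_polytope :: "'a::euclidean_space set \<Rightarrow> bool" where
  "rational_polytope P \<longleftrightarrow>
     (\<exists>V. finite V \<and> (\<forall>v\<in>V. \<forall>i\<in>Basis. v \<bullet> i \<in> \<rat>) \<and> P = convex hull V)"

text \<open>Height of a point: sup (= max, since polyhedra are closed) of z with (x,z) in H;
  +infinity if unbounded, -infinity if empty.\<close>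
definition point_height :: "('a \<times> real) set \<Rightarrow> 'a \<Rightarrow> ereal" where
  "point_height H x = Sup (ereal ` {z. (x, z) \<in> H})"

definition height :: "('a \<times> real) set \<Rightarrow> ereal" where
  "height H = (SUP x. point_height H x)"

definition R_set :: "'a::euclidean_space set \<Rightarrow> real \<Rightarrow> real \<Rightarrow> ('a \<times> real) set" where
  "R_set Qx M M0 = {(x, z). x \<in> affine hull Qx \<and>
      (if x \<in> rel_interior Qx then z \<le> M
       else z \<le> M0 - infdist x Qx / diameter Qx * (M - M0))}"

end

theory Submission
  imports Defs
begin

lemma core:
  fixes Q0 :: "('a::real_normed_vector \<times> real) set" and S :: "'a set"
  assumes cvx: "convex Q0" and p: "(x, z) \<in> Q0" and p1: "(x1, z1) \<in> Q0"
    and zle: "z \<le> M0" and z1: "M0 < z1"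
    and hyp: "\<forall>y w. (y, w) \<in> Q0 \<longrightarrow> M0 < w \<longrightarrow> y \<in> S"
  shows "\<And>t. (M0 - z) / (z1 - z) < t \<Longrightarrow> t < 1 \<Longrightarrow> (1 - t) *\<^sub>R x + t *\<^sub>R x1 \<in> S"
proof -
  fix t assume t0: "(M0 - z) / (z1 - z) < t" and t1: "t < 1"
  have zz: "0 < z1 - z" using zle z1 by simp
  have "0 \<le> (M0 - z) / (z1 - z)" using zz zle by simp
  hence tpos: "0 \<le> t" using t0 by simp
  have "(1 - t) *\<^sub>R (x, z) + t *\<^sub>R (x1, z1) \<in> Q0"
    using convexD[OF cvx p p1, of "1 - t" t] tpos t1 by simp
  hence mem: "((1 - t) *\<^sub>R x + t *\<^sub>R x1, (1 - t) * z + t * z1) \<in> Q0" by simp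
  have "M0 - z < t * (z1 - z)" using t0 zz by (simp add: pos_divide_less_eq)
  hence "M0 < (1 - t) * z + t * z1" by (simp add: algebra_simps)
  thus "(1 - t) *\<^sub>R x + t *\<^sub>R x1 \<in> S" using hyp mem by blast
qed

lemma lemma2:
  fixes Q0 :: "((real ^ 'm) \<times> real) set"
    and Qx :: "(real ^ 'm) set"
    and M M0 :: real
  assumes "M0 < M"
    and "rational_polyhedron Q0"
    and "height Q0 = ereal M"
    and "rational_polytope Qx"
    and "aff_dim Qx \<ge> 1"
    and "{x. \<exists>z>M0. (x, z) \<in> Q0} \<subseteq> rel_interior Qx"
  shows "Q0 \<subseteq> R_set Qx M M0"
proof
  note MM = assms(1)
  obtain F where F: "Q0 = (\<Inter>(a, b)\<in>F. {x. a \<bullet> x \<le> b})"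
    using assms(2) unfolding rational_polyhedron_def by blast
  have cvx: "convex Q0" unfolding F
    by (rule convex_INT) (auto simp: convex_halfspace_le)
  obtain V where V: "finite V" "Qx = convex hull V"
    using assms(4) unfolding rational_polytope_def by blast
  have cpt: "compact Qx" using V by (simp add: compact_convex_hull finite_imp_compact)
  hence bnd: "bounded Qx" by (rule compact_imp_bounded)
  have hyp: "\<And>y w. (y, w) \<in> Q0 \<Longrightarrow> M0 < w \<Longrightarrow> y \<in> Qx"
    using assms(6) rel_interior_subset by blast
  have hypA: "\<forall>y w. (y, w) \<in> Q0 \<longrightarrow> M0 < w \<longrightarrow> y \<in> Qx" using hyp by blast
  have hyp': "\<And>y w. (y, w) \<in> Q0 \<Longrightarrow> M0 < w \<Longrightarrow> y \<in> rel_interior Qx"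
    using assms(6) by blast
  obtain a b where ab: "a \<in> Qx" "b \<in> Qx" "a \<noteq> b"
  proof -
    have "\<not> (\<forall>a\<in>Qx. \<forall>b\<in>Qx. a = b)"
    proof
      assume h: "\<forall>a\<in>Qx. \<forall>b\<in>Qx. a = b"
      have "Qx = {} \<or> (\<exists>c. Qx = {c})" using h by blast
      thus False using assms(5) by auto
    qed
    thus ?thesis using that by blast
  qed
  define D where "D = diameter Qx"
  have Dpos: "0 < D"
    using diameter_bounded_bound[OF bnd ab(1) ab(2)] ab(3) unfolding D_def
    by (metis dist_pos_lt order_less_le_trans)
  have zM: "z \<le> M" if "(x, z) \<in> Q0" for x z
  proof -
    have "ereal z \<le> point_height Q0 x"
      unfolding point_height_def using that by (intro Sup_upper) auto
    also have "\<dots> \<le> height Q0" unfolding height_def by (intro SUP_upper) auto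
    finally show ?thesis using assms(3) by simp
  qed
  have high: "\<exists>x1 z1. (x1, z1) \<in> Q0 \<and> w < z1" if "w < M" for w
  proof -
    have "ereal w < height Q0" using that assms(3) by simp
    then obtain x1 where "ereal w < point_height Q0 x1"
      unfolding height_def by (auto simp: less_SUP_iff)
    then obtain z1 where "(x1, z1) \<in> Q0" "w < z1"
      unfolding point_height_def by (auto simp: less_Sup_iff)
    thus ?thesis by blast
  qed
  fix p assume pQ: "p \<in> Q0"
  obtain x z where pxz: "p = (x, z)" by (cases p)
  have xzQ: "(x, z) \<in> Q0" using pQ pxz by simp
  show "p \<in> R_set Qx M M0"
  proof (cases "x \<in> rel_interior Qx")
    case True
    have "x \<in> affine hull Qx"
      by (meson True hull_inc rel_interior_subset subsetD)
    thus ?thesis using True zM[OF xzQ] pxz unfolding R_set_def by simp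
  next
    case False
    have zle: "z \<le> M0" using False hyp'[OF xzQ] by force
    obtain x1 z1 where p1: "(x1, z1) \<in> Q0" "M0 < z1" using high[OF MM] by blast
    note seg = core[OF cvx xzQ p1(1) zle p1(2) hypA]
    define t0 where "t0 = (M0 - z) / (z1 - z)"
    have zz: "0 < z1 - z" using zle p1 by simp
    have t0nn: "0 \<le> t0" unfolding t0_def using zz zle by simp
    have t01: "t0 < 1" unfolding t0_def using zz p1 by (simp add: divide_less_eq)
    define t where "t = (t0 + 1) / 2"
    have tt: "t0 < t" "t < 1" "0 < t" using t0nn t01 unfolding t_def by auto
    have xt: "(1 - t) *\<^sub>R x + t *\<^sub>R x1 \<in> Qx" using seg tt unfolding t0_def by blast
    have x1Q: "x1 \<in> Qx" using hyp[OF p1] .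
    have aff: "x \<in> affine hull Qx"
    proof -
      have A: "affine (affine hull Qx)" by simp
      have one: "1 / (1 - t) + - t / (1 - t) = 1" using tt by (simp add: field_simps)
      have "(1 / (1 - t)) *\<^sub>R ((1 - t) *\<^sub>R x + t *\<^sub>R x1) + (- t / (1 - t)) *\<^sub>R x1
              \<in> affine hull Qx"
        using mem_affine[OF A, of "(1 - t) *\<^sub>R x + t *\<^sub>R x1" x1 "1 / (1 - t)" "- t / (1 - t)"]
          xt x1Q one by (simp add: hull_inc)
      moreover have "(1 / (1 - t)) *\<^sub>R ((1 - t) *\<^sub>R x + t *\<^sub>R x1) + (- t / (1 - t)) *\<^sub>R x1 = x"
      proof -
        have c1: "1 / (1 - t) * (1 - t) = 1" "1 / (1 - t) * t = t / (1 - t)" using tt by auto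
        show ?thesis using tt by (simp add: scaleR_add_right c1)
      qed
      ultimately show ?thesis by simp
    qed
    define d where "d = infdist x Qx"
    have dnn: "0 \<le> d" unfolding d_def by (rule infdist_nonneg)
    have key: "d * (z1' - M0) \<le> (M0 - z) * D" if q1: "(x1', z1') \<in> Q0" "M0 < z1'" for x1' z1'
    proof -
      note seg' = core[OF cvx xzQ q1(1) zle q1(2) hypA]
      define s0 where "s0 = (M0 - z) / (z1' - z)"
      have zz': "0 < z1' - z" using zle q1 by simp
      have s0nn: "0 \<le> s0" unfolding s0_def using zz' zle by simp
      have s01: "s0 < 1" unfolding s0_def using zz' q1 by (simp add: divide_less_eq)
      have x1'Q: "x1' \<in> Qx" using hyp[OF q1] .
      define N where "N = norm (x - x1')"
      have bound: "d / (d + D) \<le> s"  if s: "s0 < s" "s < 1" for s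
      proof -
        have xs: "(1 - s) *\<^sub>R x + s *\<^sub>R x1' \<in> Qx" using seg' s unfolding s0_def by blast
        have e1: "x - ((1 - s) *\<^sub>R x + s *\<^sub>R x1') = s *\<^sub>R (x - x1')"
          by (simp add: algebra_simps)
        have e2: "((1 - s) *\<^sub>R x + s *\<^sub>R x1') - x1' = (1 - s) *\<^sub>R (x - x1')"
          by (simp add: algebra_simps)
        have sp: "0 \<le> s" "0 \<le> 1 - s" using s s0nn by auto
        have "d \<le> dist x ((1 - s) *\<^sub>R x + s *\<^sub>R x1')" unfolding d_def by (rule infdist_le[OF xs])
        also have "\<dots> = s * N" unfolding dist_norm e1 N_def using sp by simp
        finally have d1: "d \<le> s * N" .
        have "dist ((1 - s) *\<^sub>R x + s *\<^sub>R x1') x1' \<le> D"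
          unfolding D_def by (rule diameter_bounded_bound[OF bnd xs x1'Q])
        hence d2: "(1 - s) * N \<le> D" unfolding dist_norm e2 N_def using sp by simp
        have "d * (1 - s) \<le> s * N * (1 - s)" using d1 sp by (simp add: mult_right_mono)
        also have "\<dots> = s * ((1 - s) * N)" by simp
        also have "\<dots> \<le> s * D" using d2 sp by (simp add: mult_left_mono)
        finally have "d * (1 - s) \<le> s * D" .
        hence "d \<le> s * (d + D)" by (simp add: algebra_simps)
        thus ?thesis using dnn Dpos by (simp add: divide_le_eq mult.commute)
      qed
      have "d / (d + D) \<le> s0" by (rule dense_ge_bounded[OF s01]) (use bound in auto)
      hence "d \<le> s0 * (d + D)" using dnn Dpos by (simp add: divide_le_eq mult.commute)
      hence "d * (z1' - z) \<le> (M0 - z) * (d + D)"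
        unfolding s0_def using zz' by (simp add: field_simps)
      thus ?thesis by (simp add: algebra_simps)
    qed
    have fin: "d * (M - M0) \<le> (M0 - z) * D"
    proof (cases "d = 0")
      case True thus ?thesis using zle Dpos by simp
    next
      case False
      hence dp: "0 < d" using dnn by simp
      have "M \<le> M0 + (M0 - z) * D / d"
      proof (rule dense_le_bounded[OF MM])
        fix w assume w: "M0 < w" "w < M"
        then obtain x2 z2 where q: "(x2, z2) \<in> Q0" "w < z2" using high by blast
        have "d * (z2 - M0) \<le> (M0 - z) * D" using key[OF q(1)] q w by simp
        hence "z2 - M0 \<le> (M0 - z) * D / d" using dp by (simp add: le_divide_eq mult.commute)
        thus "w \<le> M0 + (M0 - z) * D / d" using q by simp
      qed
      hence "M - M0 \<le> (M0 - z) * D / d" by simp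
      thus ?thesis using dp by (simp add: le_divide_eq mult.commute)
    qed
    have "z \<le> M0 - d / D * (M - M0)"
    proof -
      have "d / D * (M - M0) = d * (M - M0) / D" by simp
      also have "\<dots> \<le> M0 - z" using fin Dpos by (simp add: divide_le_eq)
      finally show ?thesis by simp
    qed
    thus ?thesis using False aff pxz unfolding R_set_def d_def D_def by simp
  qed
qed

end
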